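(* Let $C_n$ be the cycle graph on $n$ nodes. For every fixed $\epsilon\in(0,1)$, $t_{\epsilon,1}(C_n)=\Theta_\epsilon(n^3)$, i.e. there are constants $0<c_\epsilon\le C_\epsilon$ depending only on $\epsilon$ with $c_\epsilon n^3\le t_{\epsilon,1}(C_n)\le C_\epsilon n^3$.
   Context: The averaging process on a finite, undirected, connected graph $G=(V,E)$, $V=\{1,\dots,n\}$: the state vector $v(t)\in\mathbb R^n$, $t=0,1,2,\dots$, starts from a given $v(0)$; at each step $t\ge 1$ an edge $\{i,j\}\in E$ is chosen uniformly at random (independently of all previous choices) and both $v_i$ and $v_j$ are replaced by $(v_i+v_j)/2$, all other coordinates unchanged. $\bar v=(a,\dots,a)^T$ with $a=\frac1n\sum_i v_i(0)$. $t_{\epsilon,1}(G)$ is the least $t\in\mathbb N$ such that for every $v(0)$ with $\|v(0)\|_1=1$ one has $\mathbb E\|v(t)-\bar v\|_1\le\epsilon$. *)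

theory Defs
  imports "HOL-Probability.Probability"
begin

text \<open>Graphs on the vertex set {0..<n}; states are vectors nat => real (only
  coordinates 0..<n are relevant). Each undirected edge {i,j} is represented
  by exactly one ordered pair (i,j) in the edge set E.\<close>

definition avg_step :: "nat \<times> nat \<Rightarrow> (nat \<Rightarrow> real) \<Rightarrow> (nat \<Rightarrow> real)" where
  "avg_step e v = (let (i, j) = e; m = (v i + v j) / 2 in v(i := m, j := m))"

fun avg_state :: "(nat \<times> nat) set \<Rightarrow> (nat \<Rightarrow> real) \<Rightarrow> nat \<Rightarrow> (nat \<Rightarrow> real) pmf" where
  "avg_state E v 0 = return_pmf v"
| "avg_state E v (Suc t) =
     bind_pmf (avg_state E v t) (\<lambda>w. map_pmf (\<lambda>e. avg_step e w) (pmf_of_set E))"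

definition l1norm :: "nat \<Rightarrow> (nat \<Rightarrow> real) \<Rightarrow> real" where
  "l1norm n v = (\<Sum>i<n. \<bar>v i\<bar>)"

definition mean_val :: "nat \<Rightarrow> (nat \<Rightarrow> real) \<Rightarrow> real" where
  "mean_val n v = (\<Sum>i<n. v i) / real n"

definition exp_l1_dist :: "nat \<Rightarrow> (nat \<times> nat) set \<Rightarrow> (nat \<Rightarrow> real) \<Rightarrow> nat \<Rightarrow> real" where
  "exp_l1_dist n E v t =
     measure_pmf.expectation (avg_state E v t) (\<lambda>w. \<Sum>i<n. \<bar>w i - mean_val n v\<bar>)"

definition t_eps_1 :: "real \<Rightarrow> nat \<Rightarrow> (nat \<times> nat) set \<Rightarrow> nat" where
  "t_eps_1 \<epsilon> n E = (LEAST t. \<forall>v. l1norm n v = 1 \<longrightarrow> exp_l1_dist n E v t \<le> \<epsilon>)"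

definition cycle_edges :: "nat \<Rightarrow> (nat \<times> nat) set" where
  "cycle_edges n = {(i, Suc i mod n) | i. i < n}"

end

theory Submission
  imports Defs
begin

lemma phi_diff:
  fixes a b :: real
  shows "\<bar>a * \<bar>a\<bar> - b * \<bar>b\<bar>\<bar> \<le> \<bar>a - b\<bar> * (\<bar>a\<bar> + \<bar>b\<bar>)"
proof (cases "a \<ge> 0"; cases "b \<ge> 0")
  assume h: "a \<ge> 0" "b \<ge> 0"
  hence "a * \<bar>a\<bar> - b * \<bar>b\<bar> = (a - b) * (\<bar>a\<bar> + \<bar>b\<bar>)" by (simp add: algebra_simps)
  thus ?thesis by (simp add: abs_mult)
next
  assume h: "\<not> a \<ge> 0" "\<not> b \<ge> 0"
  hence "a * \<bar>a\<bar> - b * \<bar>b\<bar> = (a - b) * (\<bar>a\<bar> + \<bar>b\<bar>)" by (simp add: algebra_simps)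
  thus ?thesis by (simp add: abs_mult)
next
  assume h: "a \<ge> 0" "\<not> b \<ge> 0"
  hence ab: "a * b \<le> 0" by (simp add: mult_nonneg_nonpos)
  have e1: "a * \<bar>a\<bar> - b * \<bar>b\<bar> = a * a + b * b" using h by simp
  have e2: "\<bar>a - b\<bar> * (\<bar>a\<bar> + \<bar>b\<bar>) = a * a - 2 * (a * b) + b * b" using h by (simp add: algebra_simps)
  have "a * a + b * b \<ge> 0" by simp
  thus ?thesis unfolding e1 e2 using ab by simp
next
  assume h: "\<not> a \<ge> 0" "b \<ge> 0"
  hence ab: "a * b \<le> 0" by (simp add: mult_nonpos_nonneg)
  have e1: "a * \<bar>a\<bar> - b * \<bar>b\<bar> = - (a * a + b * b)" using h by simp
  have e2: "\<bar>a - b\<bar> * (\<bar>a\<bar> + \<bar>b\<bar>) = a * a - 2 * (a * b) + b * b" using h by (simp add: algebra_simps)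
  have "a * a + b * b \<ge> 0" by simp
  thus ?thesis unfolding e1 e2 using ab by simp
qed

lemma sq_sum_le:
  fixes x y :: real
  shows "(\<bar>x\<bar> + \<bar>y\<bar>)\<^sup>2 \<le> 2 * x\<^sup>2 + 2 * y\<^sup>2"
proof -
  have "(\<bar>x\<bar> + \<bar>y\<bar>)\<^sup>2 + (\<bar>x\<bar> - \<bar>y\<bar>)\<^sup>2 = 2 * x\<^sup>2 + 2 * y\<^sup>2"
    by (simp add: power2_eq_square algebra_simps)
  thus ?thesis using zero_le_power2[of "\<bar>x\<bar> - \<bar>y\<bar>"] by linarith
qed

lemma nash:
  fixes u :: "nat \<Rightarrow> real" and n :: nat
  assumes n1: "n \<ge> 1" and s0: "(\<Sum>i<n. u i) = 0" and l1: "(\<Sum>i<n. \<bar>u i\<bar>) \<le> 2"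
  shows "(\<Sum>i<n. (u i)\<^sup>2) ^ 3 \<le> 64 * (\<Sum>k<n. (u k - u (Suc k mod n))\<^sup>2)"
proof -
  define \<phi> :: "real \<Rightarrow> real" where "\<phi> x = x * \<bar>x\<bar>" for x
  define B where "B = (\<Sum>k<n-1. \<bar>u (Suc k) - u k\<bar> * (\<bar>u (Suc k)\<bar> + \<bar>u k\<bar>))"
  define x where "x = (\<Sum>i<n. (u i)\<^sup>2)"
  define q where "q = (\<Sum>k<n. (u k - u (Suc k mod n))\<^sup>2)"
  have B0: "B \<ge> 0" unfolding B_def by (intro sum_nonneg) auto
  have x0: "x \<ge> 0" unfolding x_def by (intro sum_nonneg) auto
  have q0: "q \<ge> 0" unfolding q_def by (intro sum_nonneg) auto
  have tele: "\<bar>\<phi> (u j) - \<phi> (u i)\<bar> \<le> B" if "i \<le> j" "j < n" for i j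
  proof -
    have "\<phi> (u j) - \<phi> (u i) = (\<Sum>k=i..<j. \<phi> (u (Suc k)) - \<phi> (u k))"
      using sum_Suc_diff'[OF that(1), of "\<lambda>k. \<phi> (u k)"] by simp
    hence "\<bar>\<phi> (u j) - \<phi> (u i)\<bar> \<le> (\<Sum>k=i..<j. \<bar>\<phi> (u (Suc k)) - \<phi> (u k)\<bar>)"
      by (simp add: sum_abs)
    also have "\<dots> \<le> (\<Sum>k=i..<j. \<bar>u (Suc k) - u k\<bar> * (\<bar>u (Suc k)\<bar> + \<bar>u k\<bar>))"
      by (intro sum_mono) (simp add: \<phi>_def phi_diff)
    also have "\<dots> \<le> B" unfolding B_def
      by (intro sum_mono2) (use that in auto)
    finally show ?thesis .
  qed
  have all: "\<bar>\<phi> (u j) - \<phi> (u i)\<bar> \<le> B" if "i < n" "j < n" for i j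
  proof (cases "i \<le> j")
    case True thus ?thesis using tele that by auto
  next
    case False thus ?thesis using tele[of j i] that by (simp add: abs_minus_commute)
  qed
  have sq: "(u i)\<^sup>2 \<le> B" if "i < n" for i
  proof (rule ccontr)
    assume "\<not> (u i)\<^sup>2 \<le> B"
    hence big: "(u i)\<^sup>2 > B" by simp
    show False
    proof (cases "u i > 0")
      case True
      have "u j > 0" if "j < n" for j
      proof -
        have "\<phi> (u j) \<ge> \<phi> (u i) - B" using all[OF \<open>i<n\<close> that] by simp
        moreover have "\<phi> (u i) = (u i)\<^sup>2" using True by (simp add: \<phi>_def power2_eq_square)
        ultimately have "\<phi> (u j) > 0" using big by simp
        thus ?thesis unfolding \<phi>_def by (metis abs_ge_zero mult_nonpos_nonneg not_less)
      qed
      hence "(\<Sum>j<n. u j) > 0" by (intro sum_pos) (use n1 in \<open>auto simp: lessThan_empty_iff\<close>)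
      thus False using s0 by simp
    next
      case False
      hence neg: "u i < 0" using big B0 by (cases "u i = 0") auto
      have "u j < 0" if "j < n" for j
      proof -
        have "\<phi> (u j) \<le> \<phi> (u i) + B" using all[OF \<open>i<n\<close> that] by simp
        moreover have "\<phi> (u i) = - (u i)\<^sup>2" using neg by (simp add: \<phi>_def power2_eq_square)
        ultimately have "\<phi> (u j) < 0" using big by simp
        thus ?thesis unfolding \<phi>_def by (metis abs_ge_zero mult_nonneg_nonneg not_less)
      qed
      hence "(\<Sum>j<n. - u j) > 0" by (intro sum_pos) (use n1 in \<open>auto simp: lessThan_empty_iff\<close>)
      thus False using s0 by (simp add: sum_negf)
    qed
  qed
  have CS: "B\<^sup>2 \<le> (\<Sum>k<n-1. (u (Suc k) - u k)\<^sup>2) * (\<Sum>k<n-1. (\<bar>u (Suc k)\<bar> + \<bar>u k\<bar>)\<^sup>2)"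
    unfolding B_def using Cauchy_Schwarz_ineq_sum[of "\<lambda>k. \<bar>u (Suc k) - u k\<bar>" "\<lambda>k. \<bar>u (Suc k)\<bar> + \<bar>u k\<bar>" "{..<n-1}"]
    by simp
  have q': "(\<Sum>k<n-1. (u (Suc k) - u k)\<^sup>2) \<le> q"
  proof -
    have "(\<Sum>k<n-1. (u (Suc k) - u k)\<^sup>2) = (\<Sum>k<n-1. (u k - u (Suc k mod n))\<^sup>2)"
      by (intro sum.cong) (auto simp: power2_commute)
    also have "\<dots> \<le> q" unfolding q_def by (intro sum_mono2) auto
    finally show ?thesis .
  qed
  have s4: "(\<Sum>k<n-1. (\<bar>u (Suc k)\<bar> + \<bar>u k\<bar>)\<^sup>2) \<le> 4 * x"
  proof -
    have "(\<Sum>k<n-1. (\<bar>u (Suc k)\<bar> + \<bar>u k\<bar>)\<^sup>2) \<le> (\<Sum>k<n-1. 2 * (u (Suc k))\<^sup>2 + 2 * (u k)\<^sup>2)"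
      by (intro sum_mono sq_sum_le)
    also have "\<dots> = 2 * (\<Sum>k<n-1. (u (Suc k))\<^sup>2) + 2 * (\<Sum>k<n-1. (u k)\<^sup>2)"
      by (simp add: sum.distrib sum_distrib_left)
    also have "(\<Sum>k<n-1. (u (Suc k))\<^sup>2) \<le> x"
    proof -
      have "x = (u 0)\<^sup>2 + (\<Sum>k<n-1. (u (Suc k))\<^sup>2)"
        unfolding x_def using n1 sum.lessThan_Suc_shift[of "\<lambda>k. (u k)\<^sup>2" "n-1"] by simp
      thus ?thesis by simp
    qed
    also have "(\<Sum>k<n-1. (u k)\<^sup>2) \<le> x" unfolding x_def by (intro sum_mono2) auto
    finally show ?thesis by simp
  qed
  have B2: "B\<^sup>2 \<le> 4 * q * x"
  proof -
    have "B\<^sup>2 \<le> q * (4 * x)"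
      using CS q' s4 by (meson order_trans mult_mono sum_nonneg zero_le_power2 q0)
    thus ?thesis by simp
  qed
  have xB: "x \<le> 2 * sqrt B"
  proof -
    have "x \<le> (\<Sum>i<n. \<bar>u i\<bar> * sqrt B)" unfolding x_def
    proof (intro sum_mono)
      fix i assume "i \<in> {..<n}"
      hence "\<bar>u i\<bar> \<le> sqrt B" using sq real_sqrt_le_mono[OF sq[of i]] by auto
      hence "\<bar>u i\<bar> * \<bar>u i\<bar> \<le> \<bar>u i\<bar> * sqrt B" by (intro mult_left_mono) auto
      moreover have "(u i)\<^sup>2 = \<bar>u i\<bar> * \<bar>u i\<bar>" by (simp add: power2_eq_square)
      ultimately show "(u i)\<^sup>2 \<le> \<bar>u i\<bar> * sqrt B" by simp
    qed
    also have "\<dots> = sqrt B * (\<Sum>i<n. \<bar>u i\<bar>)" by (simp add: sum_distrib_left mult.commute)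
    also have "\<dots> \<le> sqrt B * 2" by (intro mult_left_mono) (use l1 B0 in auto)
    finally show ?thesis by simp
  qed
  have x2: "x\<^sup>2 \<le> 4 * B"
  proof -
    have "x\<^sup>2 \<le> (2 * sqrt B)\<^sup>2" using xB x0 by (intro power_mono) auto
    thus ?thesis using B0 by (simp add: power_mult_distrib)
  qed
  have x4: "x ^ 4 \<le> 64 * q * x"
  proof -
    have "x ^ 4 = (x\<^sup>2)\<^sup>2" by simp
    also have "\<dots> \<le> (4 * B)\<^sup>2" using x2 x0 by (intro power_mono) auto
    also have "\<dots> = 16 * B\<^sup>2" by (simp add: power_mult_distrib)
    also have "\<dots> \<le> 64 * q * x" using B2 by simp
    finally show ?thesis .
  qed
  have "x ^ 3 \<le> 64 * q"
  proof (cases "x = 0")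
    case True thus ?thesis using q0 by simp
  next
    case False
    hence "x > 0" using x0 by simp
    have "x * x ^ 3 \<le> x * (64 * q)" using x4 by (simp add: algebra_simps power_numeral_reduce)
    thus ?thesis using \<open>x > 0\<close> by simp
  qed
  thus ?thesis unfolding x_def q_def .
qed

lemma sum_upd2:
  fixes F :: "nat \<Rightarrow> real \<Rightarrow> real"
  assumes "finite A" "k \<in> A" "j \<in> A" "k \<noteq> j"
  shows "(\<Sum>i\<in>A. F i ((w(k:=m, j:=m)) i)) = (\<Sum>i\<in>A. F i (w i)) - F k (w k) - F j (w j) + F k m + F j m"
proof -
  have r1: "(\<Sum>i\<in>A. G i) = G k + G j + (\<Sum>i\<in>A - {k} - {j}. G i)" for G :: "nat \<Rightarrow> real"
    using assms by (simp add: sum.remove[of A k] sum.remove[of "A - {k}" j])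
  have eq: "(\<Sum>i\<in>A - {k} - {j}. F i ((w(k:=m, j:=m)) i)) = (\<Sum>i\<in>A - {k} - {j}. F i (w i))"
    by (intro sum.cong) auto
  show ?thesis
    using r1[of "\<lambda>i. F i ((w(k:=m, j:=m)) i)"] r1[of "\<lambda>i. F i (w i)"] eq assms(4) by simp
qed

lemma avg_step_eq: "avg_step (k, j) w = w(k := (w k + w j)/2, j := (w k + w j)/2)"
  by (simp add: avg_step_def Let_def)

lemma cycle_edges_img: "cycle_edges n = (\<lambda>k. (k, Suc k mod n)) ` {..<n}"
  unfolding cycle_edges_def by auto

lemma cycle_edges_inj: "inj_on (\<lambda>k. (k, Suc k mod n)) A"
  by (auto simp: inj_on_def)

lemma cycle_edges_fin: "finite (cycle_edges n)"
  by (simp add: cycle_edges_img)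

lemma cycle_edges_ne: "n > 0 \<Longrightarrow> cycle_edges n \<noteq> {}"
  by (auto simp: cycle_edges_img)

lemma card_cycle_edges: "card (cycle_edges n) = n"
  by (simp add: cycle_edges_img card_image[OF cycle_edges_inj])

lemma exp_step:
  assumes "n > 0"
  shows "measure_pmf.expectation (map_pmf (\<lambda>e. avg_step e w) (pmf_of_set (cycle_edges n))) \<phi>
         = (\<Sum>k<n. \<phi> (avg_step (k, Suc k mod n) w)) / n"
proof -
  have "measure_pmf.expectation (map_pmf (\<lambda>e. avg_step e w) (pmf_of_set (cycle_edges n))) \<phi>
      = (\<Sum>e\<in>cycle_edges n. \<phi> (avg_step e w)) / card (cycle_edges n)"
    using assms by (simp add: integral_pmf_of_set cycle_edges_fin cycle_edges_ne)
  also have "(\<Sum>e\<in>cycle_edges n. \<phi> (avg_step e w)) = (\<Sum>k<n. \<phi> (avg_step (k, Suc k mod n) w))"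
    unfolding cycle_edges_img by (subst sum.reindex[OF cycle_edges_inj]) simp
  finally show ?thesis by (simp add: card_cycle_edges)
qed

lemma fin_support:
  assumes "finite E" "E \<noteq> {}"
  shows "finite (set_pmf (avg_state E v t))"
  by (induction t) (use assms in auto)

lemma exp_bind_fin:
  fixes f :: "'b \<Rightarrow> real"
  assumes fM: "finite (set_pmf M)" and fN: "\<And>x. x \<in> set_pmf M \<Longrightarrow> finite (set_pmf (N x))"
  shows "measure_pmf.expectation (bind_pmf M N) f
         = measure_pmf.expectation M (\<lambda>x. measure_pmf.expectation (N x) f)"
proof -
  define S where "S = set_pmf M"
  define T where "T = (\<Union>x\<in>S. set_pmf (N x))"
  have fS: "finite S" using fM S_def by simp
  have fT: "finite T" using fN fS unfolding T_def S_def by auto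
  have pb: "pmf (bind_pmf M N) y = (\<Sum>x\<in>S. pmf (N x) y * pmf M x)" for y
    unfolding pmf_bind S_def
    by (rule integral_measure_pmf_real) (use fM in auto)
  have "measure_pmf.expectation (bind_pmf M N) f = (\<Sum>y\<in>T. f y * pmf (bind_pmf M N) y)"
    by (rule integral_measure_pmf_real) (use fT in \<open>auto simp: T_def S_def\<close>)
  also have "\<dots> = (\<Sum>y\<in>T. \<Sum>x\<in>S. f y * pmf (N x) y * pmf M x)"
    by (simp add: pb sum_distrib_left mult.assoc)
  also have "\<dots> = (\<Sum>x\<in>S. \<Sum>y\<in>T. f y * pmf (N x) y * pmf M x)"
    by (rule sum.swap)
  also have "\<dots> = (\<Sum>x\<in>S. measure_pmf.expectation (N x) f * pmf M x)"
  proof (intro sum.cong refl)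
    fix x assume x: "x \<in> S"
    have "measure_pmf.expectation (N x) f = (\<Sum>y\<in>T. f y * pmf (N x) y)"
      by (rule integral_measure_pmf_real) (use fT x in \<open>auto simp: T_def\<close>)
    thus "(\<Sum>y\<in>T. f y * pmf (N x) y * pmf M x) = measure_pmf.expectation (N x) f * pmf M x"
      by (simp add: sum_distrib_right)
  qed
  also have "\<dots> = measure_pmf.expectation M (\<lambda>x. measure_pmf.expectation (N x) f)"
    by (rule integral_measure_pmf_real[symmetric]) (use fS in \<open>auto simp: S_def\<close>)
  finally show ?thesis .
qed

lemma exp_Suc:
  assumes "n > 0"
  shows "measure_pmf.expectation (avg_state (cycle_edges n) v (Suc t)) \<phi>
       = measure_pmf.expectation (avg_state (cycle_edges n) v t)
           (\<lambda>w. (\<Sum>k<n. \<phi> (avg_step (k, Suc k mod n) w)) / n)"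
proof -
  have fE: "finite (cycle_edges n)" "cycle_edges n \<noteq> {}"
    using assms by (auto simp: cycle_edges_fin cycle_edges_ne)
  show ?thesis
    apply (simp only: avg_state.simps)
    apply (subst exp_bind_fin)
    using fin_support[OF fE] fE apply auto[2]
    apply (simp only: exp_step[OF assms])
    done
qed

lemma support_step:
  assumes "n > 0" "w' \<in> set_pmf (avg_state (cycle_edges n) v (Suc t))"
  obtains w k where "w \<in> set_pmf (avg_state (cycle_edges n) v t)" "k < n"
    "w' = avg_step (k, Suc k mod n) w"
proof -
  have fE: "finite (cycle_edges n)" "cycle_edges n \<noteq> {}"
    using assms by (auto simp: cycle_edges_fin cycle_edges_ne)
  from assms(2) fE show ?thesis using that by (auto simp: cycle_edges_img)
qed

lemma support_inv:
  assumes n2: "n \<ge> 2" and w: "w \<in> set_pmf (avg_state (cycle_edges n) v t)"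
  shows "(\<Sum>i<n. w i) = (\<Sum>i<n. v i) \<and> (\<Sum>i<n. \<bar>w i - a\<bar>) \<le> (\<Sum>i<n. \<bar>v i - a\<bar>)"
  using w
proof (induction t arbitrary: w)
  case 0 thus ?case by simp
next
  case (Suc t)
  from support_step[of n w v t] n2 Suc.prems obtain w0 k where
    w0: "w0 \<in> set_pmf (avg_state (cycle_edges n) v t)" "k < n" "w = avg_step (k, Suc k mod n) w0"
    by auto
  define j where "j = Suc k mod n"
  define m where "m = (w0 k + w0 j) / 2"
  have kj: "k \<noteq> j" "j < n" using n2 w0(2) unfolding j_def
    by (auto simp: mod_Suc)
  have weq: "w = w0(k := m, j := m)" using w0(3) by (simp add: avg_step_eq m_def j_def)
  have s1: "(\<Sum>i<n. w i) = (\<Sum>i<n. w0 i)"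
    using sum_upd2[of "{..<n}" k j "\<lambda>i x. x" w0 m] kj w0(2) weq by (simp add: m_def)
  have s2: "(\<Sum>i<n. \<bar>w i - a\<bar>) \<le> (\<Sum>i<n. \<bar>w0 i - a\<bar>)"
  proof -
    have e: "m - a = ((w0 k - a) + (w0 j - a)) / 2" unfolding m_def by (simp add: field_simps)
    have "\<bar>m - a\<bar> = \<bar>(w0 k - a) + (w0 j - a)\<bar> / 2" unfolding e abs_divide by simp
    hence "\<bar>m - a\<bar> + \<bar>m - a\<bar> \<le> \<bar>w0 k - a\<bar> + \<bar>w0 j - a\<bar>"
      using abs_triangle_ineq[of "w0 k - a" "w0 j - a"] by simp
    thus ?thesis
      using sum_upd2[of "{..<n}" k j "\<lambda>i x. \<bar>x - a\<bar>" w0 m] kj w0(2) weq by simp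
  qed
  show ?case using Suc.IH[OF w0(1)] s1 s2 by simp
qed

lemma integrable_state: "n > 0 \<Longrightarrow> integrable (measure_pmf (avg_state (cycle_edges n) v t)) (f :: _ \<Rightarrow> real)"
  by (intro integrable_measure_pmf_finite fin_support cycle_edges_fin cycle_edges_ne)

lemma h_step:
  fixes w :: "nat \<Rightarrow> real"
  assumes n2: "n \<ge> 2" and k: "k < n"
  shows "(\<Sum>i<n. (avg_step (k, Suc k mod n) w i - a)\<^sup>2)
         = (\<Sum>i<n. (w i - a)\<^sup>2) - (w k - w (Suc k mod n))\<^sup>2 / 2"
proof -
  define j where "j = Suc k mod n"
  define m where "m = (w k + w j) / 2"
  have kj: "k \<noteq> j" "j < n" using n2 k unfolding j_def by (auto simp: mod_Suc)
  have weq: "avg_step (k, j) w = w(k := m, j := m)" by (simp add: avg_step_eq m_def)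
  have "(\<Sum>i<n. (avg_step (k, j) w i - a)\<^sup>2) = (\<Sum>i<n. (w i - a)\<^sup>2) - (w k - a)\<^sup>2 - (w j - a)\<^sup>2 + (m - a)\<^sup>2 + (m - a)\<^sup>2"
    unfolding weq using sum_upd2[of "{..<n}" k j "\<lambda>i x. (x - a)\<^sup>2" w m] kj k by simp
  also have "\<dots> = (\<Sum>i<n. (w i - a)\<^sup>2) - (w k - w j)\<^sup>2 / 2"
    unfolding m_def by (simp add: power2_eq_square field_simps)
  finally show ?thesis unfolding j_def .
qed

lemma h_avg:
  fixes w :: "nat \<Rightarrow> real"
  assumes n2: "n \<ge> 2"
  shows "(\<Sum>k<n. (\<Sum>i<n. (avg_step (k, Suc k mod n) w i - a)\<^sup>2)) / n
         = (\<Sum>i<n. (w i - a)\<^sup>2) - (\<Sum>k<n. (w k - w (Suc k mod n))\<^sup>2) / (2 * n)"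
proof -
  have "(\<Sum>k<n. (\<Sum>i<n. (avg_step (k, Suc k mod n) w i - a)\<^sup>2))
      = (\<Sum>k<n. (\<Sum>i<n. (w i - a)\<^sup>2) - (w k - w (Suc k mod n))\<^sup>2 / 2)"
    by (intro sum.cong refl h_step[OF n2]) auto
  also have "\<dots> = n * (\<Sum>i<n. (w i - a)\<^sup>2) - (\<Sum>k<n. (w k - w (Suc k mod n))\<^sup>2) / 2"
    by (simp add: sum_subtractf sum_divide_distrib)
  finally show ?thesis using n2 by (simp add: field_simps)
qed

lemma decay:
  fixes y :: "nat \<Rightarrow> real" and K :: real
  assumes K: "K > 0" and y0: "\<And>t. y t \<ge> 0" and rec: "\<And>t. y (Suc t) \<le> y t - (y t)^3 / K"
  shows "y t = 0 \<or> 2 * t / K \<le> 1 / (y t)\<^sup>2"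
proof (induction t)
  case 0 thus ?case by simp
next
  case (Suc t)
  show ?case
  proof (cases "y (Suc t) = 0")
    case True thus ?thesis by simp
  next
    case False
    define z where "z = y t"
    define s where "s = z\<^sup>2 / K"
    have yp: "y (Suc t) > 0" using False y0[of "Suc t"] by simp
    have rz: "y (Suc t) \<le> z * (1 - s)" using rec[of t] unfolding z_def s_def
      by (simp add: power2_eq_square power3_eq_cube field_simps)
    have z0: "z > 0"
    proof (rule ccontr)
      assume "\<not> z > 0" hence "z = 0" using y0[of t] z_def by simp
      thus False using rz yp by simp
    qed
    have s0: "s \<ge> 0" unfolding s_def using K by simp
    have s1: "1 - s > 0"
    proof (rule ccontr)
      assume "\<not> 1 - s > 0"
      hence "z * (1 - s) \<le> 0" using z0 by (simp add: mult_nonneg_nonpos)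
      thus False using rz yp by linarith
    qed
    have zs: "z * (1 - s) > 0" using z0 s1 by simp
    have IH: "2 * t / K \<le> 1 / z\<^sup>2" using Suc.IH z0 unfolding z_def by auto
    have p1: "(y (Suc t))\<^sup>2 \<le> (z * (1 - s))\<^sup>2" using yp rz by (intro power_mono) auto
    have p2: "0 < (z * (1 - s))\<^sup>2 * (y (Suc t))\<^sup>2" by (rule mult_pos_pos[OF zero_less_power[OF zs] zero_less_power[OF yp]])
    have "1 / (z * (1 - s))\<^sup>2 \<le> 1 / (y (Suc t))\<^sup>2"
      by (rule divide_left_mono[OF p1]) (use p2 in auto)
    moreover have "1 / (z * (1 - s))\<^sup>2 \<ge> 1 / z\<^sup>2 + 2 / K"
    proof -
      have a: "(1 + 2 * s) * (1 - s)\<^sup>2 \<le> 1"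
      proof -
        have "(1 + 2 * s) * (1 - s)\<^sup>2 = 1 - 3 * s\<^sup>2 + 2 * s^3"
          by (simp add: power2_eq_square power3_eq_cube algebra_simps)
        also have "\<dots> \<le> 1"
        proof -
          have "s^3 = s\<^sup>2 * s" by (simp add: power2_eq_square power3_eq_cube)
          moreover have "s\<^sup>2 * s \<le> s\<^sup>2 * 1" using s1 by (intro mult_left_mono) auto
          ultimately show ?thesis using zero_le_power2[of s] by linarith
        qed
        finally show ?thesis .
      qed
      have "1 / z\<^sup>2 + 2 / K = (1 + 2 * s) / z\<^sup>2"
        unfolding s_def using z0 K by (simp add: field_simps)
      also have "\<dots> = ((1 + 2 * s) * (1 - s)\<^sup>2) / ((1 - s)\<^sup>2 * z\<^sup>2)"
        using s1 by simp
      also have "\<dots> \<le> 1 / ((1 - s)\<^sup>2 * z\<^sup>2)"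
        by (rule divide_right_mono[OF a]) simp
      also have "\<dots> = 1 / (z * (1 - s))\<^sup>2" by (simp add: power_mult_distrib mult.commute)
      finally show ?thesis .
    qed
    ultimately have "1 / z\<^sup>2 + 2 / K \<le> 1 / (y (Suc t))\<^sup>2" by simp
    moreover have "2 * real (Suc t) / K = 2 * t / K + 2 / K" using K by (simp add: field_simps)
    ultimately show ?thesis using IH by simp
  qed
qed

lemma exp_affine:
  fixes f :: "'a \<Rightarrow> real"
  assumes "finite (set_pmf p)"
  shows "measure_pmf.expectation p (\<lambda>w. \<alpha> * f w + \<beta>) = \<alpha> * measure_pmf.expectation p f + \<beta>"
proof -
  have i1: "integrable (measure_pmf p) (\<lambda>w. \<alpha> * f w)" "integrable (measure_pmf p) (\<lambda>w. \<beta>)"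
    using assms by (auto intro: integrable_measure_pmf_finite)
  show ?thesis by (simp add: Bochner_Integration.integral_add[OF i1])
qed

lemma cube_tangent:
  fixes h y :: real
  assumes "h \<ge> 0" "y \<ge> 0"
  shows "y^3 + 3 * y\<^sup>2 * (h - y) \<le> h^3"
proof -
  have "h^3 - (y^3 + 3 * y\<^sup>2 * (h - y)) = (h - y)\<^sup>2 * (h + 2 * y)"
    by (simp add: power2_eq_square power3_eq_cube algebra_simps)
  also have "\<dots> \<ge> 0" using assms by simp
  finally show ?thesis by simp
qed

lemma upper:
  assumes n3: "n \<ge> 3" and eps: "\<epsilon> > 0" and tT: "real t \<ge> 64 * real n ^ 3 / \<epsilon> ^ 4"
    and v: "l1norm n v = 1"
  shows "exp_l1_dist n (cycle_edges n) v t \<le> \<epsilon>"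
proof -
  define E where "E = cycle_edges n"
  define a where "a = mean_val n v"
  define h where "h w = (\<Sum>i<n. (w i - a)\<^sup>2)" for w :: "nat \<Rightarrow> real"
  define q where "q w = (\<Sum>k<n. (w k - w (Suc k mod n))\<^sup>2)" for w :: "nat \<Rightarrow> real"
  define y where "y s = measure_pmf.expectation (avg_state E v s) h" for s
  define K where "K = 128 * real n"
  have n0: "n > 0" and n2: "n \<ge> 2" and n1: "n \<ge> 1" using n3 by auto
  have K0: "K > 0" using n0 unfolding K_def by simp
  have fin: "finite (set_pmf (avg_state E v s))" for s
    unfolding E_def using n0 by (intro fin_support cycle_edges_fin cycle_edges_ne)
  have intg: "integrable (measure_pmf (avg_state E v s)) f" for s and f :: "_ \<Rightarrow> real"
    using fin by (intro integrable_measure_pmf_finite)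
  have h0: "h w \<ge> 0" for w unfolding h_def by (intro sum_nonneg) auto
  have q0: "q w \<ge> 0" for w unfolding q_def by (intro sum_nonneg) auto
  have y0: "y s \<ge> 0" for s unfolding y_def by (intro integral_nonneg_AE) (simp add: h0)
  have va: "(\<Sum>i<n. \<bar>v i - a\<bar>) \<le> 2"
  proof -
    have "(\<Sum>i<n. \<bar>v i - a\<bar>) \<le> (\<Sum>i<n. \<bar>v i\<bar> + \<bar>a\<bar>)" by (intro sum_mono) auto
    also have "\<dots> = 1 + n * \<bar>a\<bar>" using v by (simp add: sum.distrib l1norm_def)
    also have "n * \<bar>a\<bar> = \<bar>\<Sum>i<n. v i\<bar>" unfolding a_def mean_val_def using n0 by (simp add: abs_divide)
    also have "\<dots> \<le> 1" using v sum_abs[of v "{..<n}"] by (simp add: l1norm_def)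
    finally show ?thesis by simp
  qed
  have supp: "(\<Sum>i<n. w i - a) = 0 \<and> (\<Sum>i<n. \<bar>w i - a\<bar>) \<le> 2"
    if "w \<in> set_pmf (avg_state E v s)" for w s
  proof -
    have si: "(\<Sum>i<n. w i) = (\<Sum>i<n. v i) \<and> (\<Sum>i<n. \<bar>w i - a\<bar>) \<le> (\<Sum>i<n. \<bar>v i - a\<bar>)"
      using support_inv[OF n2, of w v s a] that unfolding E_def by simp
    have "(\<Sum>i<n. w i - a) = (\<Sum>i<n. v i) - n * a" using si by (simp add: sum_subtractf)
    also have "\<dots> = 0" unfolding a_def mean_val_def using n0 by simp
    finally show ?thesis using si va by simp
  qed
  have hq: "(h w)^3 \<le> 64 * q w" if "w \<in> set_pmf (avg_state E v s)" for w s
    using nash[OF n1, of "\<lambda>i. w i - a"] supp[OF that] unfolding h_def q_def by simp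
  have rec: "y (Suc s) \<le> y s - (y s)^3 / K" for s
  proof -
    define z where "z = y s"
    have z0: "z \<ge> 0" using y0 z_def by simp
    have "y (Suc s) = measure_pmf.expectation (avg_state E v s) (\<lambda>w. h w - q w / (2 * n))"
      unfolding y_def E_def
      by (subst exp_Suc[OF n0]) (simp add: h_def q_def h_avg[OF n2])
    also have "\<dots> \<le> measure_pmf.expectation (avg_state E v s)
                      (\<lambda>w. (1 - 3 * z\<^sup>2 / K) * h w + 2 * z^3 / K)"
    proof (rule integral_mono_AE[OF intg intg], unfold AE_measure_pmf_iff, intro ballI)
      fix w assume w: "w \<in> set_pmf (avg_state E v s)"
      have "z^3 + 3 * z\<^sup>2 * (h w - z) \<le> (h w)^3" by (rule cube_tangent[OF h0 z0])
      also have "\<dots> \<le> 64 * q w" by (rule hq[OF w])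
      finally have "(z^3 + 3 * z\<^sup>2 * (h w - z)) / K \<le> 64 * q w / K"
        using K0 by (simp add: divide_right_mono)
      also have "64 * q w / K = q w / (2 * n)" unfolding K_def using n0 by simp
      finally have "(z^3 + 3 * z\<^sup>2 * (h w - z)) / K \<le> q w / (2 * n)" .
      moreover have "(1 - 3 * z\<^sup>2 / K) * h w + 2 * z^3 / K = h w - (z^3 + 3 * z\<^sup>2 * (h w - z)) / K"
        using K0 by (simp add: field_simps power2_eq_square power3_eq_cube)
      ultimately show "h w - q w / (2 * n) \<le> (1 - 3 * z\<^sup>2 / K) * h w + 2 * z^3 / K" by linarith
    qed
    also have "\<dots> = (1 - 3 * z\<^sup>2 / K) * z + 2 * z^3 / K"
      using exp_affine[OF fin] unfolding z_def y_def by simp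
    also have "\<dots> = z - z^3 / K" using K0 by (simp add: field_simps power2_eq_square power3_eq_cube)
    finally show ?thesis unfolding z_def .
  qed
  have dec: "y t = 0 \<or> 2 * real t / K \<le> 1 / (y t)\<^sup>2"
    by (rule decay[of K y, OF K0 y0 rec])
  have tpos: "real t > 0"
  proof -
    have "64 * real n ^ 3 / \<epsilon> ^ 4 > 0" using n0 eps by simp
    thus ?thesis using tT by linarith
  qed
  have ny: "n * y t \<le> \<epsilon>\<^sup>2"
  proof (cases "y t = 0")
    case True thus ?thesis by simp
  next
    case False
    hence yp: "y t > 0" using y0[of t] by simp
    with dec have "2 * real t / K \<le> 1 / (y t)\<^sup>2" by simp
    hence "(y t)\<^sup>2 \<le> K / (2 * t)" using yp tpos K0 by (simp add: field_simps)
    hence "(n * y t)\<^sup>2 \<le> n\<^sup>2 * (K / (2 * t))" using mult_left_mono[of "(y t)\<^sup>2" "K / (2 * t)" "(real n)\<^sup>2"] by (simp add: power_mult_distrib)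
    also have "\<dots> = 64 * real n ^ 3 / t" unfolding K_def using tpos
      by (simp add: field_simps power2_eq_square power3_eq_cube)
    also have "\<dots> \<le> \<epsilon> ^ 4"
      using tT tpos eps by (simp add: field_simps)
    also have "\<dots> = (\<epsilon>\<^sup>2)\<^sup>2" by simp
    finally have "(n * y t)\<^sup>2 \<le> (\<epsilon>\<^sup>2)\<^sup>2" .
    then show ?thesis by (rule power2_le_imp_le) simp
  qed
  have gb: "(\<Sum>i<n. \<bar>w i - a\<bar>) \<le> (1 / (2 * \<epsilon>) * n) * h w + \<epsilon> / 2" for w
  proof -
    define g where "g = (\<Sum>i<n. \<bar>w i - a\<bar>)"
    have "g\<^sup>2 \<le> (\<Sum>i<n. 1\<^sup>2) * (\<Sum>i<n. \<bar>w i - a\<bar>\<^sup>2)"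
      unfolding g_def using Cauchy_Schwarz_ineq_sum[of "\<lambda>_. 1" "\<lambda>i. \<bar>w i - a\<bar>" "{..<n}"] by simp
    hence g2: "g\<^sup>2 \<le> n * h w" unfolding h_def by simp
    have "g \<le> (g\<^sup>2 / \<epsilon> + \<epsilon>) / 2"
    proof -
      have "(g\<^sup>2 / \<epsilon> + \<epsilon>) / 2 - g = (g - \<epsilon>)\<^sup>2 / (2 * \<epsilon>)"
        using eps by (simp add: field_simps power2_eq_square)
      also have "\<dots> \<ge> 0" using eps by simp
      finally show ?thesis by simp
    qed
    also have "\<dots> \<le> (n * h w / \<epsilon> + \<epsilon>) / 2" using g2 eps by (simp add: divide_right_mono)
    also have "\<dots> = (1 / (2 * \<epsilon>) * n) * h w + \<epsilon> / 2" by (simp add: field_simps)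
    finally show ?thesis unfolding g_def .
  qed
  have "exp_l1_dist n (cycle_edges n) v t
        = measure_pmf.expectation (avg_state E v t) (\<lambda>w. \<Sum>i<n. \<bar>w i - a\<bar>)"
    unfolding exp_l1_dist_def E_def a_def ..
  also have "\<dots> \<le> measure_pmf.expectation (avg_state E v t) (\<lambda>w. (1 / (2 * \<epsilon>) * n) * h w + \<epsilon> / 2)"
    by (rule integral_mono_AE[OF intg intg]) (intro AE_I2 gb)
  also have "\<dots> = (1 / (2 * \<epsilon>) * n) * y t + \<epsilon> / 2"
    unfolding y_def by (rule exp_affine[OF fin])
  also have "\<dots> = (n * y t) / (2 * \<epsilon>) + \<epsilon> / 2" by simp
  also have "\<dots> \<le> \<epsilon>\<^sup>2 / (2 * \<epsilon>) + \<epsilon> / 2" using ny eps by (simp add: divide_right_mono)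
  also have "\<dots> = \<epsilon>" using eps by (simp add: power2_eq_square)
  finally show ?thesis .
qed

lemma sum_shift_mod:
  fixes H :: "nat \<Rightarrow> real"
  assumes "n > 0"
  shows "(\<Sum>k<n. H (Suc k mod n)) = (\<Sum>k<n. H k)"
proof -
  obtain m where m: "n = Suc m" using assms by (cases n) auto
  have "(\<Sum>k<n. H (Suc k mod n)) = (\<Sum>k<m. H (Suc k mod n)) + H (Suc m mod n)"
    by (simp add: m)
  also have "(\<Sum>k<m. H (Suc k mod n)) = (\<Sum>k<m. H (Suc k))"
    by (intro sum.cong) (auto simp: m)
  also have "H (Suc m mod n) = H 0" by (simp add: m)
  also have "(\<Sum>k<m. H (Suc k)) + H 0 = (\<Sum>k<n. H k)"
    unfolding m sum.lessThan_Suc_shift by simp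
  finally show ?thesis .
qed

lemma cos_mod:
  assumes "n > 0"
  shows "cos (2 * pi / n * real (m mod n) + c) = cos (2 * pi / n * real m + c)"
proof -
  have "real m = real (m mod n) + real n * real (m div n)"
    by (metis of_nat_add of_nat_mult mod_mult_div_eq add.commute mult.commute)
  hence e: "2 * pi / n * real m + c = (2 * pi / n * real (m mod n) + c) + 2 * pi * real (m div n)"
    using assms by (simp add: field_simps)
  have per: "cos (x + 2 * pi * real (m div n)) = cos x" for x
    by (simp add: cos_add cos_integer_2pi sin_integer_2pi)
  show ?thesis using arg_cong[where f=cos, OF e] per by simp
qed

definition fc :: "nat \<Rightarrow> nat \<Rightarrow> real" where
  "fc n k = cos (2 * pi / n * real k)"

definition FF :: "nat \<Rightarrow> (nat \<Rightarrow> real) \<Rightarrow> real" where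
  "FF n w = (\<Sum>i<n. w i * fc n i)"

lemma F_step:
  assumes n2: "n \<ge> 2" and k: "k < n"
  shows "FF n (avg_step (k, Suc k mod n) w)
         = FF n w - (w k - w (Suc k mod n)) * (fc n k - fc n (Suc k mod n)) / 2"
proof -
  define j where "j = Suc k mod n"
  define m where "m = (w k + w j) / 2"
  have kj: "k \<noteq> j" "j < n" using n2 k unfolding j_def by (auto simp: mod_Suc)
  have weq: "avg_step (k, j) w = w(k := m, j := m)" by (simp add: avg_step_eq m_def)
  have "FF n (avg_step (k, j) w) = FF n w - w k * fc n k - w j * fc n j + m * fc n k + m * fc n j"
    unfolding weq FF_def using sum_upd2[of "{..<n}" k j "\<lambda>i x. x * fc n i" w m] kj k by simp
  also have "\<dots> = FF n w - (w k - w j) * (fc n k - fc n j) / 2"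
    unfolding m_def by (simp add: field_simps)
  finally show ?thesis unfolding j_def .
qed

lemma lap_identity:
  assumes n3: "n \<ge> 3"
  shows "(\<Sum>k<n. (w k - w (Suc k mod n)) * (fc n k - fc n (Suc k mod n)))
         = (2 - 2 * cos (2 * pi / n)) * FF n w"
proof -
  define \<theta> where "\<theta> = 2 * pi / n"
  have n0: "n > 0" using n3 by simp
  have fS: "fc n (Suc k mod n) = cos (\<theta> * k + \<theta>)" for k
  proof -
    have "fc n (Suc k mod n) = cos (2 * pi / n * real (Suc k) + 0)"
      using cos_mod[OF n0, of "Suc k" 0] unfolding fc_def by simp
    also have "2 * pi / n * real (Suc k) + 0 = \<theta> * k + \<theta>" unfolding \<theta>_def by (simp add: algebra_simps add_divide_distrib)
    finally show ?thesis .
  qed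
  have gS: "fc n k = cos (\<theta> * real (Suc k mod n) - \<theta>)" for k
  proof -
    have "cos (\<theta> * real (Suc k mod n) - \<theta>) = cos (2 * pi / n * real (Suc k mod n) + (- \<theta>))"
      unfolding \<theta>_def by (simp add: algebra_simps)
    also have "\<dots> = cos (2 * pi / n * real (Suc k) + (- \<theta>))" by (rule cos_mod[OF n0])
    also have "2 * pi / n * real (Suc k) + (- \<theta>) = 2 * pi / n * real k" unfolding \<theta>_def by (simp add: algebra_simps add_divide_distrib)
    finally show ?thesis unfolding fc_def by simp
  qed
  have f0: "fc n k = cos (\<theta> * real k)" for k unfolding fc_def \<theta>_def by simp
  have ex: "(\<Sum>k<n. (w k - w (Suc k mod n)) * (fc n k - fc n (Suc k mod n)))
      = (\<Sum>k<n. w k * fc n k) - (\<Sum>k<n. w k * fc n (Suc k mod n))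
        - (\<Sum>k<n. w (Suc k mod n) * fc n k) + (\<Sum>k<n. w (Suc k mod n) * fc n (Suc k mod n))"
    by (simp add: algebra_simps sum.distrib sum_subtractf)
  have D: "(\<Sum>k<n. w (Suc k mod n) * fc n (Suc k mod n)) = (\<Sum>k<n. w k * fc n k)"
    using sum_shift_mod[OF n0, of "\<lambda>k. w k * fc n k"] by simp
  have C: "(\<Sum>k<n. w (Suc k mod n) * fc n k) = (\<Sum>k<n. w k * cos (\<theta> * k - \<theta>))"
  proof -
    have "(\<Sum>k<n. w (Suc k mod n) * fc n k) = (\<Sum>k<n. w (Suc k mod n) * cos (\<theta> * real (Suc k mod n) - \<theta>))"
      by (intro sum.cong refl) (simp only: gS[symmetric])
    also have "\<dots> = (\<Sum>k<n. w k * cos (\<theta> * k - \<theta>))"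
      using sum_shift_mod[OF n0, of "\<lambda>k. w k * cos (\<theta> * k - \<theta>)"] by simp
    finally show ?thesis .
  qed
  have B: "(\<Sum>k<n. w k * fc n (Suc k mod n)) = (\<Sum>k<n. w k * cos (\<theta> * k + \<theta>))"
    by (intro sum.cong refl) (simp only: fS)
  have A: "(\<Sum>k<n. w k * fc n k) = (\<Sum>k<n. w k * cos (\<theta> * k))"
    by (intro sum.cong refl) (simp only: f0)
  have lin: "(\<Sum>k<n. w k * (2 * cos (\<theta> * k) - cos (\<theta> * k + \<theta>) - cos (\<theta> * k - \<theta>)))
      = 2 * (\<Sum>k<n. w k * cos (\<theta> * k)) - (\<Sum>k<n. w k * cos (\<theta> * k + \<theta>)) - (\<Sum>k<n. w k * cos (\<theta> * k - \<theta>))"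
    by (simp add: algebra_simps sum_subtractf sum.distrib sum_distrib_left)
  have "(\<Sum>k<n. (w k - w (Suc k mod n)) * (fc n k - fc n (Suc k mod n)))
     = (\<Sum>k<n. w k * (2 * cos (\<theta> * k) - cos (\<theta> * k + \<theta>) - cos (\<theta> * k - \<theta>)))"
    using ex D C B A lin by linarith
  also have "\<dots> = (\<Sum>k<n. (2 - 2 * cos \<theta>) * (w k * cos (\<theta> * k)))"
    by (intro sum.cong refl) (simp add: cos_add cos_diff algebra_simps)
  also have "\<dots> = (2 - 2 * cos \<theta>) * FF n w"
    unfolding FF_def by (simp add: sum_distrib_left f0)
  finally show ?thesis unfolding \<theta>_def .
qed

lemma F_avg:
  assumes n3: "n \<ge> 3"
  shows "(\<Sum>k<n. FF n (avg_step (k, Suc k mod n) w)) / n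
         = (1 - (2 - 2 * cos (2 * pi / n)) / (2 * n)) * FF n w"
proof -
  have n2: "n \<ge> 2" using n3 by simp
  have "(\<Sum>k<n. FF n (avg_step (k, Suc k mod n) w))
      = (\<Sum>k<n. FF n w - (w k - w (Suc k mod n)) * (fc n k - fc n (Suc k mod n)) / 2)"
    by (intro sum.cong refl F_step[OF n2]) auto
  also have "\<dots> = n * FF n w - (\<Sum>k<n. (w k - w (Suc k mod n)) * (fc n k - fc n (Suc k mod n))) / 2"
    by (simp add: sum_subtractf sum_divide_distrib)
  also have "\<dots> = n * FF n w - (2 - 2 * cos (2 * pi / n)) * FF n w / 2"
    by (simp add: lap_identity[OF n3])
  finally show ?thesis using n3 by (simp add: field_simps)
qed

lemma lam_bounds:
  fixes n :: nat
  assumes n3: "n \<ge> 3"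
  shows "0 < 2 - 2 * cos (2 * pi / n)" "2 - 2 * cos (2 * pi / n) \<le> (2 * pi / n)\<^sup>2"
proof -
  have "cos (2 * pi / n) < cos 0"
  proof (rule cos_monotone_0_pi)
    show "0 < 2 * pi / n" using n3 by simp
    show "2 * pi / n \<le> pi" using n3 pi_gt_zero by (simp add: field_simps)
  qed simp
  thus "0 < 2 - 2 * cos (2 * pi / n)" by simp
  define x where "x = pi / n"
  have "cos (2 * pi / n) = cos (2 * x)" unfolding x_def by simp
  also have "\<dots> = 1 - 2 * sin x ^ 2" by (rule cos_double_sin)
  finally have e: "2 - 2 * cos (2 * pi / n) = 4 * (sin x)\<^sup>2" by simp
  have "(sin x)\<^sup>2 = \<bar>sin x\<bar>\<^sup>2" by simp
  also have "\<dots> \<le> \<bar>x\<bar>\<^sup>2" by (intro power_mono abs_sin_x_le_abs_x) simp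
  also have "\<dots> = x\<^sup>2" by simp
  finally have "4 * (sin x)\<^sup>2 \<le> 4 * x\<^sup>2" by simp
  also have "4 * x\<^sup>2 = (2 * pi / n)\<^sup>2" unfolding x_def by (simp add: power2_eq_square)
  finally show "2 - 2 * cos (2 * pi / n) \<le> (2 * pi / n)\<^sup>2" using e by simp
qed

lemma sum_fc0:
  assumes n3: "n \<ge> 3"
  shows "(\<Sum>i<n. fc n i) = 0"
proof -
  define one :: "nat \<Rightarrow> real" where "one = (\<lambda>_. 1)"
  have st: "avg_step (k, j) one = one" for k j
    unfolding avg_step_eq one_def by (rule ext) simp
  have "FF n one = (1 - (2 - 2 * cos (2 * pi / n)) / (2 * n)) * FF n one"
    using F_avg[OF n3, of one] n3 by (simp add: st)
  hence "(2 - 2 * cos (2 * pi / n)) / (2 * n) * FF n one = 0" by (simp add: algebra_simps)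
  hence "FF n one = 0" using lam_bounds(1)[OF n3] n3 by simp
  thus ?thesis unfolding FF_def one_def by simp
qed

lemma exp_F:
  assumes n3: "n \<ge> 3"
  shows "measure_pmf.expectation (avg_state (cycle_edges n) v t) (FF n)
         = (1 - (2 - 2 * cos (2 * pi / n)) / (2 * n)) ^ t * FF n v"
proof (induction t)
  case 0 thus ?case by simp
next
  case (Suc t)
  have n0: "n > 0" using n3 by simp
  have "measure_pmf.expectation (avg_state (cycle_edges n) v (Suc t)) (FF n)
      = measure_pmf.expectation (avg_state (cycle_edges n) v t)
          (\<lambda>w. (1 - (2 - 2 * cos (2 * pi / n)) / (2 * n)) * FF n w)"
    by (simp only: exp_Suc[OF n0] F_avg[OF n3])
  also have "\<dots> = (1 - (2 - 2 * cos (2 * pi / n)) / (2 * n)) *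
                   measure_pmf.expectation (avg_state (cycle_edges n) v t) (FF n)"
    by (rule integral_mult_right_zero)
  finally show ?case using Suc.IH by simp
qed

lemma bern:
  fixes r :: real
  assumes "0 \<le> r" "r \<le> 1"
  shows "1 - real t * (1 - r) \<le> r ^ t"
proof (induction t)
  case 0 thus ?case by simp
next
  case (Suc t)
  have "1 - real (Suc t) * (1 - r) \<le> r * (1 - real t * (1 - r))"
  proof -
    have "r * (1 - real t * (1 - r)) - (1 - real (Suc t) * (1 - r)) = real t * (1 - r) * (1 - r)"
      by (simp add: algebra_simps)
    also have "\<dots> \<ge> 0" using assms by simp
    finally show ?thesis by simp
  qed
  also have "\<dots> \<le> r * r ^ t" using Suc.IH assms by (intro mult_left_mono) auto
  finally show ?case by simp
qed

lemma lower:
  assumes n3: "n \<ge> 3" and tl: "real t * (2 * pi\<^sup>2 / real n ^ 3) < 1 - \<epsilon>"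
  shows "\<not> exp_l1_dist n (cycle_edges n) (\<lambda>i. if i = 0 then 1 else 0) t \<le> \<epsilon>"
proof -
  define v0 :: "nat \<Rightarrow> real" where "v0 = (\<lambda>i. if i = 0 then 1 else 0)"
  define lam where "lam = 2 - 2 * cos (2 * pi / n)"
  define r where "r = 1 - lam / (2 * n)"
  have n0: "n > 0" using n3 by simp
  have fin: "finite (set_pmf (avg_state (cycle_edges n) v0 s))" for s
    using n0 by (intro fin_support cycle_edges_fin cycle_edges_ne)
  have intg: "integrable (measure_pmf (avg_state (cycle_edges n) v0 s)) f" for s and f :: "_ \<Rightarrow> real"
    using fin by (intro integrable_measure_pmf_finite)
  have sv0: "(\<Sum>i<n. v0 i) = 1" unfolding v0_def using n0 by simp
  define a where "a = mean_val n v0"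
  have pw: "FF n w \<le> (\<Sum>i<n. \<bar>w i - a\<bar>)" for w
  proof -
    have "FF n w = (\<Sum>i<n. (w i - a) * fc n i)"
      unfolding FF_def using sum_fc0[OF n3] by (simp add: algebra_simps sum_subtractf sum_distrib_left[symmetric])
    also have "\<dots> \<le> (\<Sum>i<n. \<bar>w i - a\<bar>)"
    proof (intro sum_mono)
      fix i
      have "(w i - a) * fc n i \<le> \<bar>(w i - a) * fc n i\<bar>" by simp
      also have "\<dots> = \<bar>w i - a\<bar> * \<bar>fc n i\<bar>" by (simp add: abs_mult)
      also have "\<dots> \<le> \<bar>w i - a\<bar> * 1" unfolding fc_def by (intro mult_left_mono) auto
      finally show "(w i - a) * fc n i \<le> \<bar>w i - a\<bar>" by simp
    qed
    finally show ?thesis .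
  qed
  have FF0: "FF n v0 = 1"
  proof -
    have "FF n v0 = (\<Sum>i<n. if i = 0 then fc n i else 0)" unfolding FF_def v0_def
      by (intro sum.cong) auto
    also have "\<dots> = fc n 0" using n0 by simp
    finally show ?thesis by (simp add: fc_def)
  qed
  have lb: "0 < lam" "lam \<le> (2 * pi / n)\<^sup>2" using lam_bounds[OF n3] unfolding lam_def by auto
  have lam2: "lam \<le> 4" unfolding lam_def using cos_ge_minus_one[of "2 * pi / n"] by linarith
  have r0: "0 \<le> r"
  proof -
    have "lam / (2 * n) \<le> 4 / (2 * n)" using lam2 n0 by (simp add: field_simps)
    also have "\<dots> \<le> 1" using n3 by simp
    finally show ?thesis unfolding r_def by simp
  qed
  have r1: "r \<le> 1" unfolding r_def using lb n0 by simp
  have omr: "1 - r \<le> 2 * pi\<^sup>2 / real n ^ 3"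
  proof -
    have "1 - r = lam / (2 * n)" unfolding r_def by simp
    also have "\<dots> \<le> (2 * pi / n)\<^sup>2 / (2 * n)" using lb n0 by (simp add: divide_right_mono)
    also have "\<dots> = 2 * pi\<^sup>2 / real n ^ 3" using n0 by (simp add: power2_eq_square power3_eq_cube field_simps)
    finally show ?thesis .
  qed
  have "\<epsilon> < 1 - real t * (2 * pi\<^sup>2 / real n ^ 3)" using tl by simp
  also have "\<dots> \<le> 1 - real t * (1 - r)" using mult_left_mono[OF omr, of "real t"] by simp
  also have "\<dots> \<le> r ^ t" by (rule bern[OF r0 r1])
  also have "\<dots> = measure_pmf.expectation (avg_state (cycle_edges n) v0 t) (FF n)"
    using exp_F[OF n3, of v0 t] FF0 unfolding r_def lam_def by simp
  also have "\<dots> \<le> exp_l1_dist n (cycle_edges n) v0 t"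
    unfolding exp_l1_dist_def a_def[symmetric]
    by (rule integral_mono_AE[OF intg intg]) (intro AE_I2 pw)
  finally show ?thesis unfolding v0_def by simp
qed

theorem theorem7:
  fixes \<epsilon> :: real
  assumes "0 < \<epsilon>" and "\<epsilon> < 1"
  shows "\<exists>c C. 0 < c \<and> c \<le> C \<and>
           (\<forall>n\<ge>3. c * real n ^ 3 \<le> real (t_eps_1 \<epsilon> n (cycle_edges n))
                  \<and> real (t_eps_1 \<epsilon> n (cycle_edges n)) \<le> C * real n ^ 3)"
proof -
  define c where "c = (1 - \<epsilon>) / (2 * pi\<^sup>2)"
  define C where "C = 64 / \<epsilon> ^ 4 + 1"
  have c0: "0 < c" unfolding c_def using assms by simp
  have c1: "c \<le> 1"
  proof -
    have "1 \<le> pi * pi" using mult_mono[of 1 pi 1 pi] pi_gt3 by simp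
    hence "pi\<^sup>2 \<ge> 1" by (simp add: power2_eq_square)
    hence "2 * pi\<^sup>2 \<ge> 1 - \<epsilon>" using assms by simp
    thus ?thesis unfolding c_def using pi_gt_zero by (simp add: divide_le_eq)
  qed
  have C1: "1 \<le> C" unfolding C_def using assms by simp
  have main: "c * real n ^ 3 \<le> real (t_eps_1 \<epsilon> n (cycle_edges n))
              \<and> real (t_eps_1 \<epsilon> n (cycle_edges n)) \<le> C * real n ^ 3" if n3: "n \<ge> 3" for n
  proof -
    define P where "P t = (\<forall>v. l1norm n v = 1 \<longrightarrow> exp_l1_dist n (cycle_edges n) v t \<le> \<epsilon>)" for t
    define x where "x = 64 * real n ^ 3 / \<epsilon> ^ 4"
    define T where "T = nat \<lceil>x\<rceil>"
    have x0: "x \<ge> 0" unfolding x_def using assms by simp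
    have Tx: "real T \<ge> x" unfolding T_def by (rule real_nat_ceiling_ge)
    have Tx2: "real T \<le> x + 1" unfolding T_def using x0 by linarith
    have PT: "P T" unfolding P_def using upper[OF n3 assms(1)] Tx unfolding x_def by blast
    have teq: "t_eps_1 \<epsilon> n (cycle_edges n) = (LEAST t. P t)" unfolding t_eps_1_def P_def ..
    have PL: "P (LEAST t. P t)" by (rule LeastI[of P T, OF PT])
    have LT: "(LEAST t. P t) \<le> T" by (rule Least_le[of P T, OF PT])
    have up: "real (LEAST t. P t) \<le> C * real n ^ 3"
    proof -
      have "real (LEAST t. P t) \<le> x + 1" using LT Tx2 by linarith
      also have "\<dots> \<le> 64 * real n ^ 3 / \<epsilon> ^ 4 + real n ^ 3" unfolding x_def using n3
        by (simp add: one_le_power)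
      also have "\<dots> = C * real n ^ 3" unfolding C_def by (simp add: field_simps)
      finally show ?thesis .
    qed
    have lo: "c * real n ^ 3 \<le> real (LEAST t. P t)"
    proof (rule ccontr)
      assume "\<not> c * real n ^ 3 \<le> real (LEAST t. P t)"
      hence lt: "real (LEAST t. P t) < c * real n ^ 3" by simp
      have npos: "real n ^ 3 > 0" using n3 by simp
      have "real (LEAST t. P t) * (2 * pi\<^sup>2 / real n ^ 3) < c * real n ^ 3 * (2 * pi\<^sup>2 / real n ^ 3)"
        using lt npos by (intro mult_strict_right_mono) auto
      also have "\<dots> = 1 - \<epsilon>" unfolding c_def using npos by (simp add: field_simps)
      finally have "\<not> exp_l1_dist n (cycle_edges n) (\<lambda>i. if i = 0 then 1 else 0) (LEAST t. P t) \<le> \<epsilon>"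
        by (rule lower[OF n3])
      moreover have "l1norm n (\<lambda>i. if i = 0 then 1 else 0) = 1" unfolding l1norm_def using n3 by simp
      ultimately show False using PL unfolding P_def by blast
    qed
    show ?thesis using up lo teq by simp
  qed
  show ?thesis using c0 c1 C1 main by (intro exI[of _ c] exI[of _ C]) auto
qed

end
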